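(* Let $\Sigma=(I,X,\mathcal U,\phi,Y,h)$ be a forward complete control system with outputs. Then $\Sigma$ is OUGS if and only if $\Sigma$ is OUGB and OULS.
   Context: Let $I\in\{\mathbb N_0,\mathbb R_0^+\}$. A forward complete control system with outputs $\Sigma=(I,X,\mathcal U,\phi,Y,h)$ consists of: a normed space $(X,\|\cdot\|_X)$; a vector space $U$ and a normed linear subspace $(\mathcal U,\|\cdot\|_{\mathcal U})$ of $\{u:I\to U\}$ such that for all $u\in\mathcal U,\tau\in I$, $u(\cdot+\tau)\in\mathcal U$ with $\|u(\cdot+\tau)\|_{\mathcal U}\le\|u\|_{\mathcal U}$, and for $t_2\ge t_1\ge 0$ the function $u|_{[t_1,t_2]}$ ($u$ on $[t_1,t_2]$, $0$ elsewhere) lies in $\mathcal U$ with norm $\le\|u\|_{\mathcal U}$; a map $\phi:I\times X\times\mathcal U\to X$ with $\phi(0,x,u)=x$, causality, and cocycle property $\phi(t+s,x,u)=\phi(s,\phi(t,x,u),u(t+\cdot))$; a normed space $Y$ and $h:X\times U\to Y$. Write $y(t,x,u)=h(\phi(t,x,u),u(t))$, $B_r=\{x:\|x\|_X<r\}$, $B_{r,\mathcal U}=\{u:\|u\|_{\mathcal U}<r\}$; $\mathcal K_\infty$ = unbounded continuous strictly increasing functions $\mathbb R_0^+\to\mathbb R_0^+$ vanishing at $0$. OUGS: $\exists\sigma,\gamma\in\mathcal K_\infty$ with $\|y(t,x,u)\|_Y\le\sigma(\|x\|_X)+\gamma(\|u\|_{\mathcal U})$ for all $x\in X,u\in\mathcal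 U,t\in I$. OULS: $\exists r>0,\sigma,\gamma\in\mathcal K_\infty$ with the same inequality for all $x\in B_r,u\in B_{r,\mathcal U},t\in I$. OUGB: $\exists\sigma,\gamma\in\mathcal K_\infty,c>0$ with $\|y(t,x,u)\|_Y\le\sigma(\|x\|_X)+\gamma(\|u\|_{\mathcal U})+c$ for all $x,u,t$. *)

theory Defs
  imports "HOL-Analysis.Analysis"
begin

text \<open>Time domain I: either the natural numbers (embedded in the reals) or the
nonnegative reals.  Inputs are functions real => U that vanish outside I.\<close>

definition time_domain :: "real set \<Rightarrow> bool" where
  "time_domain T \<longleftrightarrow> T = range real \<or> T = {0..}"

definition shift_input :: "real set \<Rightarrow> (real \<Rightarrow> 'u::real_vector) \<Rightarrow> real \<Rightarrow> (real \<Rightarrow> 'u)" where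
  "shift_input T u \<tau> = (\<lambda>t. if t \<in> T then u (t + \<tau>) else 0)"

definition restrict_input :: "real set \<Rightarrow> (real \<Rightarrow> 'u::real_vector) \<Rightarrow> real \<Rightarrow> real \<Rightarrow> (real \<Rightarrow> 'u)" where
  "restrict_input T u t1 t2 = (\<lambda>t. if t \<in> T \<and> t1 \<le> t \<and> t \<le> t2 then u t else 0)"

text \<open>Uset is a linear subspace of functions T -> U (represented as functions vanishing
outside T) with norm nU.\<close>

definition control_system_out ::
  "real set \<Rightarrow> (real \<Rightarrow> 'u::real_vector) set \<Rightarrow> ((real \<Rightarrow> 'u) \<Rightarrow> real)
   \<Rightarrow> (real \<Rightarrow> 'x::real_normed_vector \<Rightarrow> (real \<Rightarrow> 'u) \<Rightarrow> 'x)
   \<Rightarrow> ('x \<Rightarrow> 'u \<Rightarrow> 'y::real_normed_vector) \<Rightarrow> bool" where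
  "control_system_out T Uset nU phi h \<longleftrightarrow>
     time_domain T \<and>
     \<comment> \<open>inputs are functions on T\<close>
     (\<forall>u\<in>Uset. \<forall>t. t \<notin> T \<longrightarrow> u t = 0) \<and>
     \<comment> \<open>linear subspace\<close>
     (\<lambda>t. 0) \<in> Uset \<and>
     (\<forall>u\<in>Uset. \<forall>v\<in>Uset. (\<lambda>t. u t + v t) \<in> Uset) \<and>
     (\<forall>u\<in>Uset. \<forall>a::real. (\<lambda>t. a *\<^sub>R u t) \<in> Uset) \<and>
     \<comment> \<open>norm axioms\<close>
     (\<forall>u\<in>Uset. 0 \<le> nU u) \<and>
     (\<forall>u\<in>Uset. nU u = 0 \<longleftrightarrow> u = (\<lambda>t. 0)) \<and>
     (\<forall>u\<in>Uset. \<forall>a::real. nU (\<lambda>t. a *\<^sub>R u t) = \<bar>a\<bar> * nU u) \<and>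
     (\<forall>u\<in>Uset. \<forall>v\<in>Uset. nU (\<lambda>t. u t + v t) \<le> nU u + nU v) \<and>
     \<comment> \<open>shift invariance\<close>
     (\<forall>u\<in>Uset. \<forall>\<tau>\<in>T. shift_input T u \<tau> \<in> Uset \<and> nU (shift_input T u \<tau>) \<le> nU u) \<and>
     \<comment> \<open>restriction\<close>
     (\<forall>u\<in>Uset. \<forall>t1 t2. 0 \<le> t1 \<and> t1 \<le> t2 \<longrightarrow>
        restrict_input T u t1 t2 \<in> Uset \<and> nU (restrict_input T u t1 t2) \<le> nU u) \<and>
     \<comment> \<open>identity property\<close>
     (\<forall>x. \<forall>u\<in>Uset. phi 0 x u = x) \<and>
     \<comment> \<open>causality\<close>
     (\<forall>x. \<forall>u\<in>Uset. \<forall>v\<in>Uset. \<forall>t\<in>T.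
        (\<forall>s\<in>T. s \<le> t \<longrightarrow> u s = v s) \<longrightarrow> phi t x u = phi t x v) \<and>
     \<comment> \<open>cocycle property\<close>
     (\<forall>x. \<forall>u\<in>Uset. \<forall>t\<in>T. \<forall>s\<in>T.
        phi (t + s) x u = phi s (phi t x u) (shift_input T u t))"

definition sys_output :: "(real \<Rightarrow> 'x \<Rightarrow> (real \<Rightarrow> 'u) \<Rightarrow> 'x) \<Rightarrow> ('x \<Rightarrow> 'u \<Rightarrow> 'y)
   \<Rightarrow> real \<Rightarrow> 'x \<Rightarrow> (real \<Rightarrow> 'u) \<Rightarrow> 'y" where
  "sys_output phi h t x u = h (phi t x u) (u t)"

definition Kinf :: "(real \<Rightarrow> real) \<Rightarrow> bool" where
  "Kinf f \<longleftrightarrow> continuous_on {0..} f \<and> strict_mono_on {0..} f \<and> f 0 = 0 \<and>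
     (\<forall>M. \<exists>s\<ge>0. f s > M)"

definition OUGS :: "real set \<Rightarrow> (real \<Rightarrow> 'u::real_vector) set \<Rightarrow> ((real \<Rightarrow> 'u) \<Rightarrow> real)
   \<Rightarrow> (real \<Rightarrow> 'x::real_normed_vector \<Rightarrow> (real \<Rightarrow> 'u) \<Rightarrow> 'x)
   \<Rightarrow> ('x \<Rightarrow> 'u \<Rightarrow> 'y::real_normed_vector) \<Rightarrow> bool" where
  "OUGS T Uset nU phi h \<longleftrightarrow> (\<exists>\<sigma> \<gamma>. Kinf \<sigma> \<and> Kinf \<gamma> \<and>
     (\<forall>x. \<forall>u\<in>Uset. \<forall>t\<in>T. norm (sys_output phi h t x u) \<le> \<sigma> (norm x) + \<gamma> (nU u)))"

definition OULS :: "real set \<Rightarrow> (real \<Rightarrow> 'u::real_vector) set \<Rightarrow> ((real \<Rightarrow> 'u) \<Rightarrow> real)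
   \<Rightarrow> (real \<Rightarrow> 'x::real_normed_vector \<Rightarrow> (real \<Rightarrow> 'u) \<Rightarrow> 'x)
   \<Rightarrow> ('x \<Rightarrow> 'u \<Rightarrow> 'y::real_normed_vector) \<Rightarrow> bool" where
  "OULS T Uset nU phi h \<longleftrightarrow> (\<exists>r>0. \<exists>\<sigma> \<gamma>. Kinf \<sigma> \<and> Kinf \<gamma> \<and>
     (\<forall>x. norm x < r \<longrightarrow> (\<forall>u\<in>Uset. nU u < r \<longrightarrow> (\<forall>t\<in>T.
        norm (sys_output phi h t x u) \<le> \<sigma> (norm x) + \<gamma> (nU u)))))"

definition OUGB :: "real set \<Rightarrow> (real \<Rightarrow> 'u::real_vector) set \<Rightarrow> ((real \<Rightarrow> 'u) \<Rightarrow> real)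
   \<Rightarrow> (real \<Rightarrow> 'x::real_normed_vector \<Rightarrow> (real \<Rightarrow> 'u) \<Rightarrow> 'x)
   \<Rightarrow> ('x \<Rightarrow> 'u \<Rightarrow> 'y::real_normed_vector) \<Rightarrow> bool" where
  "OUGB T Uset nU phi h \<longleftrightarrow> (\<exists>\<sigma> \<gamma> c. Kinf \<sigma> \<and> Kinf \<gamma> \<and> c > 0 \<and>
     (\<forall>x. \<forall>u\<in>Uset. \<forall>t\<in>T. norm (sys_output phi h t x u) \<le> \<sigma> (norm x) + \<gamma> (nU u) + c))"

end

theory Submission
  imports Defs
begin

lemma Kinf_nonneg: "Kinf f \<Longrightarrow> s \<ge> 0 \<Longrightarrow> f s \<ge> 0"
  unfolding Kinf_def strict_mono_on_def
  by (metis atLeast_iff order.strict_iff_order order_refl)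

lemma Kinf_add: assumes "Kinf f" "Kinf g" shows "Kinf (\<lambda>s. f s + g s)"
proof -
  have c: "continuous_on {0..} (\<lambda>s. f s + g s)"
    using assms unfolding Kinf_def by (intro continuous_on_add) auto
  have m: "strict_mono_on {0..} (\<lambda>s. f s + g s)"
    using assms unfolding Kinf_def strict_mono_on_def by (meson add_strict_mono)
  have u: "\<exists>s\<ge>0. f s + g s > M" for M
  proof -
    obtain s where "s \<ge> 0" "f s > M" using assms unfolding Kinf_def by blast
    then show ?thesis using Kinf_nonneg[OF assms(2), of s] by (intro exI[of _ s]) auto
  qed
  show ?thesis using c m u assms unfolding Kinf_def by auto
qed

lemma Kinf_lin: assumes "(a::real) > 0" shows "Kinf (\<lambda>s. a * s)"
proof -
  have u: "\<exists>s\<ge>0. a * s > M" for M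
  proof (intro exI[of _ "max 0 (M / a + 1)"] conjI)
    show "a * max 0 (M / a + 1) > M"
    proof (cases "M / a + 1 \<ge> 0")
      case True
      then show ?thesis using assms by (simp add: max_def field_simps)
    next
      case False
      then have "M < 0" using assms by (smt (verit) divide_nonneg_pos)
      then show ?thesis using False by (simp add: max_def)
    qed
  qed auto
  show ?thesis unfolding Kinf_def strict_mono_on_def using u assms
    by (auto intro!: continuous_intros)
qed

theorem lemma8:
  fixes T :: "real set" and Uset :: "(real \<Rightarrow> 'u::real_vector) set"
    and nU :: "(real \<Rightarrow> 'u) \<Rightarrow> real"
    and phi :: "real \<Rightarrow> 'x::real_normed_vector \<Rightarrow> (real \<Rightarrow> 'u) \<Rightarrow> 'x"
    and h :: "'x \<Rightarrow> 'u \<Rightarrow> 'y::real_normed_vector"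
  assumes "control_system_out T Uset nU phi h"
  shows "OUGS T Uset nU phi h \<longleftrightarrow> OUGB T Uset nU phi h \<and> OULS T Uset nU phi h"
proof
  assume "OUGS T Uset nU phi h"
  then obtain \<sigma> \<gamma> where k: "Kinf \<sigma>" "Kinf \<gamma>" and b:
    "\<forall>x. \<forall>u\<in>Uset. \<forall>t\<in>T. norm (sys_output phi h t x u) \<le> \<sigma> (norm x) + \<gamma> (nU u)"
    unfolding OUGS_def by blast
  have "OUGB T Uset nU phi h" unfolding OUGB_def
  proof (intro exI conjI)
    show "Kinf \<sigma>" "Kinf \<gamma>" "(1::real) > 0" using k by auto
    show "\<forall>x. \<forall>u\<in>Uset. \<forall>t\<in>T. norm (sys_output phi h t x u) \<le> \<sigma> (norm x) + \<gamma> (nU u) + 1"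
      using b by (meson add_increasing2 less_imp_le zero_less_one order_trans le_add_same_cancel1)
  qed
  moreover have "OULS T Uset nU phi h" unfolding OULS_def
    using k b by (intro exI[of _ 1] conjI exI[of _ \<sigma>] exI[of _ \<gamma>]) auto
  ultimately show "OUGB T Uset nU phi h \<and> OULS T Uset nU phi h" by blast
next
  assume "OUGB T Uset nU phi h \<and> OULS T Uset nU phi h"
  then obtain \<sigma>1 \<gamma>1 c where k1: "Kinf \<sigma>1" "Kinf \<gamma>1" "c > 0" and b1:
    "\<forall>x. \<forall>u\<in>Uset. \<forall>t\<in>T. norm (sys_output phi h t x u) \<le> \<sigma>1 (norm x) + \<gamma>1 (nU u) + c"
    and "OULS T Uset nU phi h"
    unfolding OUGB_def by blast
  then obtain r \<sigma>2 \<gamma>2 where k2: "r > 0" "Kinf \<sigma>2" "Kinf \<gamma>2" and b2: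
    "\<forall>x. norm x < r \<longrightarrow> (\<forall>u\<in>Uset. nU u < r \<longrightarrow> (\<forall>t\<in>T.
        norm (sys_output phi h t x u) \<le> \<sigma>2 (norm x) + \<gamma>2 (nU u)))"
    unfolding OULS_def by blast
  have nn: "\<forall>u\<in>Uset. 0 \<le> nU u" using assms unfolding control_system_out_def by (elim conjE) assumption
  define \<sigma> where "\<sigma> = (\<lambda>s. \<sigma>1 s + \<sigma>2 s + (c / r) * s)"
  define \<gamma> where "\<gamma> = (\<lambda>s. \<gamma>1 s + \<gamma>2 s + (c / r) * s)"
  have K: "Kinf \<sigma>" "Kinf \<gamma>" unfolding \<sigma>_def \<gamma>_def
    using k1 k2 by (intro Kinf_add Kinf_lin divide_pos_pos; simp)+
  have "norm (sys_output phi h t x u) \<le> \<sigma> (norm x) + \<gamma> (nU u)"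
    if u: "u \<in> Uset" and t: "t \<in> T" for x u t
  proof -
    have x0: "norm x \<ge> 0" by simp
    have u0: "nU u \<ge> 0" using nn u by blast
    note p = Kinf_nonneg[OF k1(1) x0] Kinf_nonneg[OF k2(2) x0]
      Kinf_nonneg[OF k1(2) u0] Kinf_nonneg[OF k2(3) u0]
    have cx: "(c / r) * norm x \<ge> 0" "(c / r) * nU u \<ge> 0" using k1 k2 u0 by auto
    show ?thesis
    proof (cases "norm x < r \<and> nU u < r")
      case True
      then have "norm (sys_output phi h t x u) \<le> \<sigma>2 (norm x) + \<gamma>2 (nU u)"
        using b2 u t by blast
      then show ?thesis unfolding \<sigma>_def \<gamma>_def using p cx by linarith
    next
      case False
      then have "\<not> norm x < r \<or> \<not> nU u < r" by blast
      then have "c \<le> (c / r) * norm x + (c / r) * nU u"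
      proof
        assume "\<not> norm x < r"
        then have "c \<le> (c / r) * norm x" using k1 k2
          by (simp add: field_simps)
        then show ?thesis using cx by linarith
      next
        assume "\<not> nU u < r"
        then have "c \<le> (c / r) * nU u" using k1 k2
          by (simp add: field_simps)
        then show ?thesis using cx by linarith
      qed
      moreover have "norm (sys_output phi h t x u) \<le> \<sigma>1 (norm x) + \<gamma>1 (nU u) + c"
        using b1 u t by blast
      ultimately show ?thesis unfolding \<sigma>_def \<gamma>_def using p cx by linarith
    qed
  qed
  then show "OUGS T Uset nU phi h" unfolding OUGS_def using K by blast
qed

end
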